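(* Consider the eigencurve setting in the context. Let $\tilde i\in\{0,\dots,I_{\max}-1\}$ and let $\lambda_j$ be an eigenvalue of $H$ with $\lambda_j\in[\mu2^{\tilde i},\mu2^{\tilde i+1})$. Then $$v_{t_{\tilde i+1},j}\le15\cdot\frac{\eta_{t_{\tilde i+1}}}{\lambda_j},$$ where $v_{t+1,j}=\sum_{k=0}^t\eta_k^2\prod_{i=k+1}^t(1-\eta_i\lambda_j)^2$ and $\eta_{t_{\tilde i+1}}=\left(L+\mu\sum_{j'=1}^{\tilde i+1}\Delta_{j'}2^{j'-1}\right)^{-1}$.
   Context: Let $H\in\mathbb{R}^{d\times d}$ be symmetric positive definite, with $\mu=\lambda_{\min}(H)$, $L=\lambda_{\max}(H)$ and $\kappa=L/\mu$. Let $I_{\max}=\log_2\kappa$, treated as an integer. Fix integers $0=t_0<\dots<t_{I_{\max}}=T$ with $\Delta_i=t_i-t_{i-1}$. The eigencurve learning rate is $$\eta_t=\frac{1}{L+\mu\sum_{j=1}^{i-1}\Delta_j2^{j-1}+2^{i-1}\mu(t-t_{i-1})}\quad\text{for }t\in[t_{i-1},t_i),$$ and at $t=t_{I_{\max}}=T$ it is given by the same formula with $i=I_{\max}$. *)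

theory Defs
  imports "HOL-Analysis.Analysis"
begin

definition is_eigenvalue :: "real^'n^'n \<Rightarrow> real \<Rightarrow> bool" where
  "is_eigenvalue H l \<longleftrightarrow> (\<exists>x. x \<noteq> 0 \<and> H *v x = l *\<^sub>R x)"

definition pos_def_mat :: "real^'n^'n \<Rightarrow> bool" where
  "pos_def_mat H \<longleftrightarrow> (\<forall>x. x \<noteq> 0 \<longrightarrow> x \<bullet> (H *v x) > 0)"

definition eigencurve_phase :: "real \<Rightarrow> real \<Rightarrow> (nat \<Rightarrow> nat) \<Rightarrow> nat \<Rightarrow> nat \<Rightarrow> real" where
  "eigencurve_phase L mu t i s =
     1 / (L + mu * (\<Sum>j=1..<i. (real (t j) - real (t (j-1))) * 2^(j-1))
            + 2^(i-1) * mu * (real s - real (t (i-1))))"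

text \<open>v_n = sum_{k=0}^{n-1} eta_k^2 prod_{i=k+1}^{n-1} (1 - eta_i lambda)^2,
  i.e. v_{t+1} in the paper's notation is vvar eta lambda (t+1).\<close>
definition vvar :: "(nat \<Rightarrow> real) \<Rightarrow> real \<Rightarrow> nat \<Rightarrow> real" where
  "vvar eta lam n = (\<Sum>k<n. (eta k)^2 * (\<Prod>i=k+1..<n. (1 - eta i * lam)^2))"

end

theory Submission
  imports Defs
begin

lemma vvar_Suc: "vvar eta lam (Suc m) = (1 - eta m * lam)^2 * vvar eta lam m + (eta m)^2"
proof -
  have "vvar eta lam (Suc m) = (\<Sum>k<m. (eta k)^2 * (\<Prod>i=k+1..<Suc m. (1 - eta i * lam)^2)) + (eta m)^2"
    unfolding vvar_def by simp
  also have "(\<Sum>k<m. (eta k)^2 * (\<Prod>i=k+1..<Suc m. (1 - eta i * lam)^2))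
      = (\<Sum>k<m. (1 - eta m * lam)^2 * ((eta k)^2 * (\<Prod>i=k+1..<m. (1 - eta i * lam)^2)))"
  proof (rule sum.cong)
    fix k assume "k \<in> {..<m}"
    then have "k + 1 \<le> m" by simp
    then show "(eta k)^2 * (\<Prod>i=k+1..<Suc m. (1 - eta i * lam)^2)
      = (1 - eta m * lam)^2 * ((eta k)^2 * (\<Prod>i=k+1..<m. (1 - eta i * lam)^2))"
      by (simp add: prod.atLeastLessThan_Suc)
  qed simp
  finally show ?thesis unfolding vvar_def by (simp add: sum_distrib_left)
qed

lemma step_ineq:
  fixes D D' lam v :: real
  assumes lam: "lam > 0" and D: "D \<ge> lam" and D': "D' \<le> D + lam" "D' > 0"
    and v: "v \<le> 2 / (D * lam)"
  shows "(1 - lam / D)^2 * v + (1 / D)^2 \<le> 2 / (D' * lam)"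
proof -
  have Dp: "D > 0" using lam D by linarith
  have a: "(1 - lam / D)^2 * v \<le> (1 - lam / D)^2 * (2 / (D * lam))"
    by (rule mult_left_mono[OF v]) simp
  have b: "(1 - lam / D)^2 * (2 / (D * lam)) + (1 / D)^2 \<le> 2 / ((D + lam) * lam)"
  proof -
    have key: "2*(D-lam)^2*(D+lam) + D*lam*(D+lam) \<le> 2*D^3"
    proof -
      have "2*lam^3 \<le> D^2*lam + D*lam^2"
      proof -
        have "lam^2 * lam \<le> D^2 * lam" using D lam
          by (intro mult_right_mono power_mono) auto
        moreover have "lam * lam^2 \<le> D * lam^2" using D lam by (intro mult_right_mono) auto
        ultimately show ?thesis by (simp add: power3_eq_cube power2_eq_square algebra_simps)
      qed
      then show ?thesis by (simp add: power3_eq_cube power2_eq_square algebra_simps)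
    qed
    have "(1 - lam / D)^2 * (2 / (D * lam)) + (1 / D)^2
        = (2*(D-lam)^2*(D+lam) + D*lam*(D+lam)) / (D^3 * lam * (D+lam))"
    proof -
      have h0: "1 - lam / D = (D-lam) / D" using Dp by (simp add: field_simps)
      have h: "(1 - lam / D)^2 = (D-lam)^2 / D^2" unfolding h0 by (simp add: power_divide)
      have "(D-lam)^2 / D^2 * (2 / (D * lam)) + (1 / D)^2 = (2*(D-lam)^2*(D+lam) + D*lam*(D+lam)) / (D^3 * lam * (D+lam))"
        using Dp lam by (simp add: divide_simps) (simp add: algebra_simps power2_eq_square power3_eq_cube)
      then show ?thesis using h by simp
    qed
    also have "\<dots> \<le> 2*D^3 / (D^3 * lam * (D+lam))"
      using key Dp lam by (intro divide_right_mono) auto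
    also have "\<dots> = 2 / ((D + lam) * lam)" using Dp lam by (simp add: divide_simps)
    finally show ?thesis .
  qed
  have c: "2 / ((D + lam) * lam) \<le> 2 / (D' * lam)"
    using D' lam Dp by (intro divide_left_mono mult_right_mono mult_pos_pos) auto
  show ?thesis using a b c by linarith
qed

theorem lemma11:
  fixes H :: "real^'n^'n" and mu L lam :: real and Imax T itil :: nat
    and t :: "nat \<Rightarrow> nat" and eta :: "nat \<Rightarrow> real"
  assumes sym: "transpose H = H"
    and pd: "pos_def_mat H"
    and mu_min: "is_eigenvalue H mu" "\<forall>l. is_eigenvalue H l \<longrightarrow> mu \<le> l"
    and L_max: "is_eigenvalue H L" "\<forall>l. is_eigenvalue H l \<longrightarrow> l \<le> L"
    and Imax: "L / mu = 2 ^ Imax"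
    and t0: "t 0 = 0"
    and t_mono: "\<forall>i<Imax. t i < t (Suc i)"
    and tT: "t Imax = T"
    and eta_phase: "\<forall>i\<in>{1..Imax}. \<forall>s. t (i-1) \<le> s \<and> s < t i \<longrightarrow> eta s = eigencurve_phase L mu t i s"
    and eta_T: "eta T = eigencurve_phase L mu t Imax T"
    and itil: "itil < Imax"
    and lam_eig: "is_eigenvalue H lam"
    and lam_range: "mu * 2 ^ itil \<le> lam" "lam < mu * 2 ^ (itil + 1)"
  shows "vvar eta lam (t (itil + 1)) \<le> 15 * eta (t (itil + 1)) / lam"
proof -
  have mu_pos: "mu > 0"
  proof -
    obtain x where x: "x \<noteq> 0" "H *v x = mu *\<^sub>R x" using mu_min(1) unfolding is_eigenvalue_def by blast
    have "x \<bullet> (H *v x) > 0" using pd x(1) unfolding pos_def_mat_def by blast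
    then have "mu * (x \<bullet> x) > 0" using x(2) by simp
    moreover have "x \<bullet> x > 0" using x(1) by simp
    ultimately show ?thesis by (simp add: zero_less_mult_iff)
  qed
  have L_eq: "L = mu * 2 ^ Imax" using Imax mu_pos by (simp add: field_simps)
  have lam_pos: "lam > 0" proof -
    have "mu * 2 ^ itil > 0" using mu_pos by simp
    then show ?thesis using lam_range(1) by linarith
  qed
  have "mu * 2 ^ (itil + 1) \<le> mu * 2 ^ Imax"
    using itil mu_pos by (intro mult_left_mono power_increasing) auto
  then have lam_L: "lam \<le> L" using lam_range(2) L_eq by linarith
  define E where "E i s = L + mu * (\<Sum>j=1..<i. (real (t j) - real (t (j-1))) * 2^(j-1))
            + 2^(i-1) * mu * (real s - real (t (i-1)))" for i s
  have ep: "eigencurve_phase L mu t i s = 1 / E i s" for i s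
    unfolding eigencurve_phase_def E_def by simp
  have tmono': "t (j-1) \<le> t j" if "1 \<le> j" "j \<le> Imax" for j
  proof -
    have "j - 1 < Imax" "Suc (j-1) = j" using that by arith+
    then show ?thesis using t_mono by (metis less_imp_le)
  qed
  have E_ge: "E i s \<ge> L" if "1 \<le> i" "i \<le> Imax" "t (i-1) \<le> s" for i s
  proof -
    have "(\<Sum>j=1..<i. (real (t j) - real (t (j-1))) * 2^(j-1)) \<ge> 0"
      using that tmono' by (intro sum_nonneg) auto
    moreover have "2^(i-1) * mu * (real s - real (t (i-1))) \<ge> 0" using that mu_pos by simp
    ultimately show ?thesis unfolding E_def using mu_pos by (simp add: mult_nonneg_nonneg)
  qed
  have E_Suc: "E i (Suc s) = E i s + 2^(i-1) * mu" for i s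
    unfolding E_def by (simp add: algebra_simps)
  have etaA: "eta s = 1 / E i s" if "1 \<le> i" "i \<le> Imax" "t (i-1) \<le> s" "s \<le> t i" for i s
  proof (cases "s < t i")
    case True then show ?thesis using eta_phase that ep by auto
  next
    case False
    then have s: "s = t i" using that by simp
    show ?thesis
    proof (cases "i = Imax")
      case True then show ?thesis using eta_T s tT ep by simp
    next
      case False
      then have i1: "Suc i \<le> Imax" "t i < t (Suc i)" using that t_mono by auto
      have "eta s = 1 / E (Suc i) s" using eta_phase i1 s ep by auto
      also have "E (Suc i) s = E i s"
        unfolding E_def using s that by (simp add: algebra_simps)
      finally show ?thesis .
    qed
  qed
  have phase: "\<exists>i\<in>{1..k}. t (i-1) \<le> m \<and> m < t i" if "k \<le> Imax" "m < t k" for k m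
    using that
  proof (induction k)
    case 0 then show ?case using t0 by simp
  next
    case (Suc k)
    show ?case
    proof (cases "m < t k")
      case True then show ?thesis using Suc by force
    next
      case False then show ?thesis using Suc by force
    qed
  qed
  define n where "n = t (itil + 1)"
  have inv: "m \<le> n \<Longrightarrow> vvar eta lam m \<le> 2 * eta m / lam" for m
  proof (induction m)
    case 0
    have "t 0 \<le> n" unfolding n_def using t0 by simp
    have "eta 0 = 1 / E 1 0" using etaA[of 1 0] t0 itil by simp
    moreover have "E 1 0 \<ge> L" using E_ge[of 1 0] t0 itil by simp
    ultimately have "eta 0 > 0" using lam_L lam_pos by simp
    then show ?case using lam_pos by (simp add: vvar_def)
  next
    case (Suc m)
    then have mn: "m < t (itil + 1)" unfolding n_def by simp
    obtain i where i: "i \<in> {1..itil+1}" "t (i-1) \<le> m" "m < t i"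
      using phase[OF _ mn] itil by auto
    have iI: "1 \<le> i" "i \<le> Imax" using i(1) itil by auto
    have em: "eta m = 1 / E i m" using etaA[OF iI i(2)] i(3) by simp
    have em1: "eta (Suc m) = 1 / E i (Suc m)" using etaA[OF iI] i(2,3) by simp
    have Em: "E i m \<ge> L" using E_ge[OF iI i(2)] .
    have slope: "2^(i-1) * mu \<le> lam"
    proof -
      have "(2::real)^(i-1) \<le> 2^itil" using i(1) by (intro power_increasing) auto
      then have "2^(i-1) * mu \<le> 2^itil * mu" using mu_pos by (intro mult_right_mono) auto
      then show ?thesis using lam_range(1) by (simp add: mult.commute)
    qed
    have IH: "vvar eta lam m \<le> 2 / (E i m * lam)"
      using Suc.IH Suc.prems em by simp
    have "vvar eta lam (Suc m) = (1 - lam / E i m)^2 * vvar eta lam m + (1 / E i m)^2"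
      using vvar_Suc em by simp
    also have "\<dots> \<le> 2 / (E i (Suc m) * lam)"
    proof -
      have nn: "2^(i-1) * mu \<ge> 0" using mu_pos by simp
      have p: "E i (Suc m) > 0" "E i m \<ge> lam" "E i (Suc m) \<le> E i m + lam"
        using E_Suc[of i m] Em lam_L lam_pos nn slope by linarith+
      show ?thesis by (rule step_ineq[OF lam_pos p(2) p(3) p(1) IH])
    qed
    also have "\<dots> = 2 * eta (Suc m) / lam" using em1 by simp
    finally show ?case .
  qed
  have "vvar eta lam n \<le> 2 * eta n / lam" using inv by simp
  moreover have "eta n \<ge> 0"
  proof -
    have "eta n = 1 / E (itil+1) n" using etaA[of "itil+1" n] itil t_mono unfolding n_def by (simp add: less_imp_le)
    moreover have "E (itil+1) n \<ge> L" using E_ge[of "itil+1" n] itil t_mono unfolding n_def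
      by (simp add: less_imp_le)
    ultimately show ?thesis using lam_L lam_pos by simp
  qed
  moreover have "2 * eta n / lam \<le> 15 * eta n / lam"
    using lam_pos \<open>eta n \<ge> 0\<close> by (intro divide_right_mono) auto
  ultimately show ?thesis unfolding n_def by linarith
qed

end
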